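(* Let $\varphi:A^\bullet\to B^\bullet$ and $\psi:B^\bullet\to C^\bullet$ be (continuous) homomorphisms of complexes of Abelian topological groups. (a) If $\varphi$ and $\psi$ are quasi-open, then so is $\psi\varphi$. (b) If $\psi$ is a topological embedding and the zero homomorphism $0^\bullet\to C^\bullet/\psi B^\bullet$ is quasi-open, then $\psi$ is quasi-open; and if in addition $\psi\varphi$ is quasi-open, then $\varphi$ is quasi-open.
   Context: Complexes are $\mathbb Z$-graded complexes of Abelian topological groups with continuous differentials; homomorphisms are continuous chain maps. For a complex $A^\bullet$ with differential $d_A$, $Z^n(A^\bullet)=\ker(d_A|A^n)$ with the subspace topology. A homomorphism $\varphi:A^\bullet\to B^\bullet$ is quasi-open if for every $n$ the homomorphism $\varphi'^n:Z^n(A^\bullet)\oplus B^{n-1}\to Z^n(B^\bullet)$, $(a,b)\mapsto\varphi a-d_Bb$, is open. $C^\bullet/\psi B^\bullet$ carries the quotient topology and induced differential, and $0^\bullet$ denotes the zero complex. *)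

theory Defs
  imports "HOL-Analysis.Analysis" "HOL-Algebra.Coset"
begin

definition ab_top_group :: "'a monoid \<Rightarrow> 'a topology \<Rightarrow> bool" where
  "ab_top_group G T \<longleftrightarrow> comm_group G \<and> topspace T = carrier G
     \<and> continuous_map (prod_topology T T) T (\<lambda>(x,y). x \<otimes>\<^bsub>G\<^esub> y)
     \<and> continuous_map T T (\<lambda>x. inv\<^bsub>G\<^esub> x)"

record 'a cplx =
  grp :: "int \<Rightarrow> 'a monoid"
  top :: "int \<Rightarrow> 'a topology"
  dif :: "int \<Rightarrow> 'a \<Rightarrow> 'a"

definition is_complex :: "'a cplx \<Rightarrow> bool" where
  "is_complex A \<longleftrightarrow> (\<forall>n. ab_top_group (grp A n) (top A n)
     \<and> dif A n \<in> hom (grp A n) (grp A (n+1))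
     \<and> continuous_map (top A n) (top A (n+1)) (dif A n)
     \<and> (\<forall>x \<in> carrier (grp A n). dif A (n+1) (dif A n x) = \<one>\<^bsub>grp A (n+2)\<^esub>))"

definition cplx_hom :: "'a cplx \<Rightarrow> 'b cplx \<Rightarrow> (int \<Rightarrow> 'a \<Rightarrow> 'b) \<Rightarrow> bool" where
  "cplx_hom A B f \<longleftrightarrow> (\<forall>n. f n \<in> hom (grp A n) (grp B n)
     \<and> continuous_map (top A n) (top B n) (f n)
     \<and> (\<forall>x \<in> carrier (grp A n). f (n+1) (dif A n x) = dif B n (f n x)))"

definition cycles :: "'a cplx \<Rightarrow> int \<Rightarrow> 'a set" where
  "cycles A n = {x \<in> carrier (grp A n). dif A n x = \<one>\<^bsub>grp A (n+1)\<^esub>}"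

text \<open>The map \<phi>'^n : Z^n(A) + B^{n-1} \<rightarrow> Z^n(B), (a,b) \<mapsto> \<phi> a - d_B b, and quasi-openness.\<close>
definition quasi_open :: "'a cplx \<Rightarrow> 'b cplx \<Rightarrow> (int \<Rightarrow> 'a \<Rightarrow> 'b) \<Rightarrow> bool" where
  "quasi_open A B f \<longleftrightarrow> (\<forall>n.
     open_map (prod_topology (subtopology (top A n) (cycles A n)) (top B (n-1)))
              (subtopology (top B n) (cycles B n))
              (\<lambda>(a,b). f n a \<otimes>\<^bsub>grp B n\<^esub> inv\<^bsub>grp B n\<^esub> (dif B (n-1) b)))"

definition cplx_comp :: "(int \<Rightarrow> 'b \<Rightarrow> 'c) \<Rightarrow> (int \<Rightarrow> 'a \<Rightarrow> 'b) \<Rightarrow> int \<Rightarrow> 'a \<Rightarrow> 'c" where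
  "cplx_comp g f = (\<lambda>n. g n \<circ> f n)"

definition quot_topology :: "'a topology \<Rightarrow> ('a \<Rightarrow> 'b) \<Rightarrow> 'b topology" where
  "quot_topology X f = topology (\<lambda>U. U \<subseteq> f ` topspace X \<and> openin X {x \<in> topspace X. f x \<in> U})"

definition quot_cplx :: "'c cplx \<Rightarrow> 'b cplx \<Rightarrow> (int \<Rightarrow> 'b \<Rightarrow> 'c) \<Rightarrow> 'c set cplx" where
  "quot_cplx C B g = \<lparr> grp = (\<lambda>n. grp C n Mod (g n ` carrier (grp B n))),
     top = (\<lambda>n. quot_topology (top C n) (\<lambda>x. (g n ` carrier (grp B n)) #>\<^bsub>grp C n\<^esub> x)),
     dif = (\<lambda>n U. (g (n+1) ` carrier (grp B (n+1))) #>\<^bsub>grp C (n+1)\<^esub> dif C n (SOME x. x \<in> U)) \<rparr>"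

definition zero_cplx :: "unit cplx" where
  "zero_cplx = \<lparr> grp = (\<lambda>n. \<lparr> carrier = {()}, mult = (\<lambda>_ _. ()), one = () \<rparr>),
     top = (\<lambda>n. discrete_topology {()}), dif = (\<lambda>n _. ()) \<rparr>"

definition zero_hom :: "'a cplx \<Rightarrow> int \<Rightarrow> unit \<Rightarrow> 'a" where
  "zero_hom C = (\<lambda>n _. \<one>\<^bsub>grp C n\<^esub>)"

end

theory Submission
  imports Defs
begin


lemma cx_grp: "is_complex A \<Longrightarrow> comm_group (grp A n)"
  by (simp add: is_complex_def ab_top_group_def)
lemma cx_top: "is_complex A \<Longrightarrow> topspace (top A n) = carrier (grp A n)"
  by (simp add: is_complex_def ab_top_group_def)
lemma cx_tg: "is_complex A \<Longrightarrow> ab_top_group (grp A n) (top A n)"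
  by (simp add: is_complex_def)
lemma cx_dhom: "is_complex A \<Longrightarrow> dif A n \<in> hom (grp A n) (grp A (n+1))"
  by (simp add: is_complex_def)
lemma cx_dcont: "is_complex A \<Longrightarrow> continuous_map (top A n) (top A (n+1)) (dif A n)"
  by (simp add: is_complex_def)
lemma cx_dd: "is_complex A \<Longrightarrow> x \<in> carrier (grp A n) \<Longrightarrow> dif A (n+1) (dif A n x) = \<one>\<^bsub>grp A (n+2)\<^esub>"
  by (simp add: is_complex_def)

lemma cx_gh: "is_complex A \<Longrightarrow> group_hom (grp A n) (grp A (n+1)) (dif A n)"
  by (simp add: group_hom_def group_hom_axioms_def cx_dhom cx_grp comm_group.axioms(2))

lemma ch_gh: "is_complex A \<Longrightarrow> is_complex B \<Longrightarrow> cplx_hom A B f \<Longrightarrow> group_hom (grp A n) (grp B n) (f n)"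
  by (simp add: group_hom_def group_hom_axioms_def cx_grp comm_group.axioms(2) cplx_hom_def)
lemma ch_cont: "cplx_hom A B f \<Longrightarrow> continuous_map (top A n) (top B n) (f n)"
  by (simp add: cplx_hom_def)
lemma ch_comm: "cplx_hom A B f \<Longrightarrow> x \<in> carrier (grp A n) \<Longrightarrow> f (n+1) (dif A n x) = dif B n (f n x)"
  by (simp add: cplx_hom_def)
lemma ch_comm': "cplx_hom A B f \<Longrightarrow> x \<in> carrier (grp A (n-1)) \<Longrightarrow> f n (dif A (n-1) x) = dif B (n-1) (f (n-1) x)"
  using ch_comm[of A B f x "n-1"] by simp
lemma cx_dd': "is_complex A \<Longrightarrow> x \<in> carrier (grp A (n-1)) \<Longrightarrow> dif A n (dif A (n-1) x) = \<one>\<^bsub>grp A (n+1)\<^esub>"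
  using cx_dd[of A x "n-1"] by (simp add: add.commute)

lemma tg_transl_cont:
  assumes "ab_top_group G T" "a \<in> carrier G"
  shows "continuous_map T T (\<lambda>x. a \<otimes>\<^bsub>G\<^esub> x)"
proof -
  have m: "continuous_map (prod_topology T T) T (\<lambda>(x,y). x \<otimes>\<^bsub>G\<^esub> y)" and ts: "topspace T = carrier G"
    using assms by (auto simp: ab_top_group_def)
  have "continuous_map T (prod_topology T T) (\<lambda>x. (a, x))"
    by (intro continuous_map_pairedI) (auto simp: ts assms)
  from continuous_map_compose[OF this m] show ?thesis by (simp add: o_def)
qed

lemma tg_transl_open:
  assumes "ab_top_group G T" "a \<in> carrier G" "openin T U"
  shows "openin T {x \<in> carrier G. a \<otimes>\<^bsub>G\<^esub> x \<in> U}"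
proof -
  have ts: "topspace T = carrier G" using assms by (auto simp: ab_top_group_def)
  show ?thesis using openin_continuous_map_preimage[OF tg_transl_cont[OF assms(1,2)] assms(3)]
    by (simp add: ts)
qed

lemma tg_mult_nbhd:
  assumes "ab_top_group G T" "openin T Ob" "\<one>\<^bsub>G\<^esub> \<in> Ob"
  shows "\<exists>O'. openin T O' \<and> \<one>\<^bsub>G\<^esub> \<in> O' \<and> (\<forall>x\<in>O'. \<forall>y\<in>O'. x \<otimes>\<^bsub>G\<^esub> y \<in> Ob)"
proof -
  have m: "continuous_map (prod_topology T T) T (\<lambda>(x,y). x \<otimes>\<^bsub>G\<^esub> y)" and ts: "topspace T = carrier G"
    and g: "comm_group G"
    using assms by (auto simp: ab_top_group_def)
  have one: "\<one>\<^bsub>G\<^esub> \<in> carrier G" using g by (simp add: comm_group_def group.is_monoid monoid.one_closed)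
  have op: "openin (prod_topology T T) {p \<in> topspace (prod_topology T T). (\<lambda>(x,y). x \<otimes>\<^bsub>G\<^esub> y) p \<in> Ob}"
    using openin_continuous_map_preimage[OF m assms(2)] .
  have "(\<one>\<^bsub>G\<^esub>, \<one>\<^bsub>G\<^esub>) \<in> {p \<in> topspace (prod_topology T T). (\<lambda>(x,y). x \<otimes>\<^bsub>G\<^esub> y) p \<in> Ob}"
    using one assms(3) g by (simp add: ts comm_group_def group.is_monoid monoid.l_one)
  from op[unfolded openin_prod_topology_alt, rule_format, OF this]
  obtain U V where UV: "openin T U" "openin T V" "\<one>\<^bsub>G\<^esub> \<in> U" "\<one>\<^bsub>G\<^esub> \<in> V"
     "U \<times> V \<subseteq> {p \<in> topspace (prod_topology T T). (\<lambda>(x,y). x \<otimes>\<^bsub>G\<^esub> y) p \<in> Ob}"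
    by blast
  have "\<forall>x\<in>U \<inter> V. \<forall>y\<in>U \<inter> V. x \<otimes>\<^bsub>G\<^esub> y \<in> Ob"
  proof (intro ballI)
    fix x y assume "x \<in> U \<inter> V" "y \<in> U \<inter> V"
    then have "(x,y) \<in> U \<times> V" by blast
    with UV(5) show "x \<otimes>\<^bsub>G\<^esub> y \<in> Ob" by auto
  qed
  then show ?thesis using UV(1-4) by (intro exI[of _ "U \<inter> V"]) auto
qed


lemma cyc_sub: "cycles A n \<subseteq> carrier (grp A n)" by (auto simp: cycles_def)

lemma cyc_one: "is_complex A \<Longrightarrow> \<one>\<^bsub>grp A n\<^esub> \<in> cycles A n"
  using group_hom.hom_one[OF cx_gh] cx_grp[of A n]
  by (auto simp: cycles_def comm_group_def group.is_monoid monoid.one_closed)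

lemma cyc_mult: "is_complex A \<Longrightarrow> x \<in> cycles A n \<Longrightarrow> y \<in> cycles A n \<Longrightarrow> x \<otimes>\<^bsub>grp A n\<^esub> y \<in> cycles A n"
proof -
  assume c: "is_complex A" "x \<in> cycles A n" "y \<in> cycles A n"
  interpret h: group_hom "grp A n" "grp A (n+1)" "dif A n" using cx_gh[OF c(1)] .
  show ?thesis using c by (auto simp: cycles_def)
qed

lemma cyc_inv: "is_complex A \<Longrightarrow> x \<in> cycles A n \<Longrightarrow> inv\<^bsub>grp A n\<^esub> x \<in> cycles A n"
proof -
  assume c: "is_complex A" "x \<in> cycles A n"
  interpret h: group_hom "grp A n" "grp A (n+1)" "dif A n" using cx_gh[OF c(1)] .
  show ?thesis using c by (auto simp: cycles_def)
qed

lemma cyc_dif: "is_complex A \<Longrightarrow> b \<in> carrier (grp A (n-1)) \<Longrightarrow> dif A (n-1) b \<in> cycles A n"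
proof -
  assume c: "is_complex A" "b \<in> carrier (grp A (n-1))"
  interpret h: group_hom "grp A (n-1)" "grp A (n-1+1)" "dif A (n-1)" using cx_gh[OF c(1)] .
  have "dif A (n-1) b \<in> carrier (grp A (n-1+1))" using h.hom_closed[OF c(2)] .
  then show ?thesis using c cx_dd'[OF c] by (auto simp: cycles_def)
qed

lemma cyc_hom: "is_complex A \<Longrightarrow> is_complex B \<Longrightarrow> cplx_hom A B f \<Longrightarrow> a \<in> cycles A n \<Longrightarrow> f n a \<in> cycles B n"
proof -
  assume c: "is_complex A" "is_complex B" "cplx_hom A B f" "a \<in> cycles A n"
  interpret h: group_hom "grp A (n+1)" "grp B (n+1)" "f (n+1)" using ch_gh[OF c(1-3)] .
  interpret h2: group_hom "grp A n" "grp B n" "f n" using ch_gh[OF c(1-3)] .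
  show ?thesis using c ch_comm[OF c(3), of a n] by (auto simp: cycles_def)
qed

definition qo_nb :: "'a cplx \<Rightarrow> 'b cplx \<Rightarrow> (int \<Rightarrow> 'a \<Rightarrow> 'b) \<Rightarrow> int \<Rightarrow> bool" where
  "qo_nb A B f n \<longleftrightarrow> (\<forall>U V. openin (top A n) U \<and> \<one>\<^bsub>grp A n\<^esub> \<in> U \<and> openin (top B (n-1)) V \<and> \<one>\<^bsub>grp B (n-1)\<^esub> \<in> V \<longrightarrow>
     (\<exists>Ob. openin (top B n) Ob \<and> \<one>\<^bsub>grp B n\<^esub> \<in> Ob \<and>
       (\<forall>z \<in> Ob \<inter> cycles B n. \<exists>a \<in> U \<inter> cycles A n. \<exists>b \<in> V.
           z = f n a \<otimes>\<^bsub>grp B n\<^esub> inv\<^bsub>grp B n\<^esub> (dif B (n-1) b))))"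

lemma qo_imp_nb:
  assumes cA: "is_complex A" and cB: "is_complex B" and h: "cplx_hom A B f" and q: "quasi_open A B f"
  shows "qo_nb A B f n"
  unfolding qo_nb_def
proof (intro allI impI, elim conjE)
  fix U V assume U: "openin (top A n) U" "\<one>\<^bsub>grp A n\<^esub> \<in> U" and V: "openin (top B (n-1)) V" "\<one>\<^bsub>grp B (n-1)\<^esub> \<in> V"
  let ?F = "\<lambda>(a,b). f n a \<otimes>\<^bsub>grp B n\<^esub> inv\<^bsub>grp B n\<^esub> (dif B (n-1) b)"
  interpret Bn: comm_group "grp B n" using cx_grp[OF cB] .
  interpret fh: group_hom "grp A n" "grp B n" "f n" using ch_gh[OF cA cB h] .
  interpret dh: group_hom "grp B (n-1)" "grp B (n-1+1)" "dif B (n-1)" using cx_gh[OF cB] .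
  have om: "open_map (prod_topology (subtopology (top A n) (cycles A n)) (top B (n-1)))
              (subtopology (top B n) (cycles B n)) ?F"
    using q by (simp add: quasi_open_def)
  have "openin (subtopology (top A n) (cycles A n)) (U \<inter> cycles A n)"
    using U by (auto simp: openin_subtopology)
  then have "openin (prod_topology (subtopology (top A n) (cycles A n)) (top B (n-1))) ((U \<inter> cycles A n) \<times> V)"
    using V by (simp add: openin_prod_Times_iff)
  then have "openin (subtopology (top B n) (cycles B n)) (?F ` ((U \<inter> cycles A n) \<times> V))"
    using om by (simp add: open_map_def)
  then obtain Ob where Ob: "openin (top B n) Ob" "?F ` ((U \<inter> cycles A n) \<times> V) = Ob \<inter> cycles B n"
    by (auto simp: openin_subtopology)
  have 1: "?F (\<one>\<^bsub>grp A n\<^esub>, \<one>\<^bsub>grp B (n-1)\<^esub>) = \<one>\<^bsub>grp B n\<^esub>"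
    using dh.hom_one by simp
  have "(\<one>\<^bsub>grp A n\<^esub>, \<one>\<^bsub>grp B (n-1)\<^esub>) \<in> (U \<inter> cycles A n) \<times> V"
    using U V cyc_one[OF cA] by auto
  then have "\<one>\<^bsub>grp B n\<^esub> \<in> Ob" using Ob(2) 1 by (metis IntD1 image_eqI)
  moreover have "\<forall>z \<in> Ob \<inter> cycles B n. \<exists>a \<in> U \<inter> cycles A n. \<exists>b \<in> V.
           z = f n a \<otimes>\<^bsub>grp B n\<^esub> inv\<^bsub>grp B n\<^esub> (dif B (n-1) b)"
    using Ob(2)[symmetric] by force
  ultimately show "\<exists>Ob. openin (top B n) Ob \<and> \<one>\<^bsub>grp B n\<^esub> \<in> Ob \<and>
       (\<forall>z \<in> Ob \<inter> cycles B n. \<exists>a \<in> U \<inter> cycles A n. \<exists>b \<in> V.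
           z = f n a \<otimes>\<^bsub>grp B n\<^esub> inv\<^bsub>grp B n\<^esub> (dif B (n-1) b))" using Ob(1) by blast
qed


lemma nb_imp_qo:
  assumes cA: "is_complex A" and cB: "is_complex B" and h: "cplx_hom A B f" and nb: "\<And>n. qo_nb A B f n"
  shows "quasi_open A B f"
  unfolding quasi_open_def open_map_def
proof (intro allI impI)
  fix n W
  let ?F = "\<lambda>(a,b). f n a \<otimes>\<^bsub>grp B n\<^esub> inv\<^bsub>grp B n\<^esub> (dif B (n-1) b)"
  assume W: "openin (prod_topology (subtopology (top A n) (cycles A n)) (top B (n-1))) W"
  interpret Bn: comm_group "grp B n" using cx_grp[OF cB] .
  interpret An: comm_group "grp A n" using cx_grp[OF cA] .
  interpret Bm: comm_group "grp B (n-1)" using cx_grp[OF cB] .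
  interpret fh: group_hom "grp A n" "grp B n" "f n" using ch_gh[OF cA cB h] .
  interpret dh: group_hom "grp B (n-1)" "grp B (n-1+1)" "dif B (n-1)" using cx_gh[OF cB] .
  have Wsub: "W \<subseteq> cycles A n \<times> carrier (grp B (n-1))"
    using openin_subset[OF W] cyc_sub[of A n] by (auto simp: cx_top[OF cA] cx_top[OF cB])
  show "openin (subtopology (top B n) (cycles B n)) (?F ` W)"
    unfolding openin_subopen[of _ "?F ` W"]
  proof (intro ballI)
    fix y assume "y \<in> ?F ` W"
    then obtain a0 b0 where ab0: "(a0,b0) \<in> W" "y = ?F (a0,b0)" by auto
    have a0: "a0 \<in> cycles A n" "a0 \<in> carrier (grp A n)" and b0: "b0 \<in> carrier (grp B (n-1))"
      using ab0(1) Wsub cyc_sub[of A n] by auto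
    from W[unfolded openin_prod_topology_alt, rule_format, OF ab0(1)]
    obtain S1 S2 where S: "openin (subtopology (top A n) (cycles A n)) S1" "openin (top B (n-1)) S2"
      "a0 \<in> S1" "b0 \<in> S2" "S1 \<times> S2 \<subseteq> W" by blast
    from S(1) obtain U1 where U1: "openin (top A n) U1" "S1 = U1 \<inter> cycles A n"
      by (auto simp: openin_subtopology)
    define U where "U = {x \<in> carrier (grp A n). a0 \<otimes>\<^bsub>grp A n\<^esub> x \<in> U1}"
    define V where "V = {x \<in> carrier (grp B (n-1)). b0 \<otimes>\<^bsub>grp B (n-1)\<^esub> x \<in> S2}"
    have oU: "openin (top A n) U" unfolding U_def by (rule tg_transl_open[OF cx_tg[OF cA] a0(2) U1(1)])
    have oV: "openin (top B (n-1)) V" unfolding V_def by (rule tg_transl_open[OF cx_tg[OF cB] b0 S(2)])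
    have 1: "\<one>\<^bsub>grp A n\<^esub> \<in> U" "\<one>\<^bsub>grp B (n-1)\<^esub> \<in> V"
      using a0 b0 S(3,4) U1(2) by (auto simp: U_def V_def)
    obtain Ob where Ob: "openin (top B n) Ob" "\<one>\<^bsub>grp B n\<^esub> \<in> Ob"
      "\<forall>z \<in> Ob \<inter> cycles B n. \<exists>a \<in> U \<inter> cycles A n. \<exists>b \<in> V.
           z = f n a \<otimes>\<^bsub>grp B n\<^esub> inv\<^bsub>grp B n\<^esub> (dif B (n-1) b)"
      using nb[of n] oU oV 1 unfolding qo_nb_def by blast
    have db0: "dif B (n-1) b0 \<in> carrier (grp B n)" using dh.hom_closed[OF b0] by simp
    have yc: "y \<in> carrier (grp B n)" using ab0(2) db0 fh.hom_closed[OF a0(2)] by simp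
    have ycyc: "y \<in> cycles B n"
      using ab0(2) cyc_mult[OF cB cyc_hom[OF cA cB h a0(1)] cyc_inv[OF cB cyc_dif[OF cB b0]]] by simp
    define T where "T = {z \<in> carrier (grp B n). inv\<^bsub>grp B n\<^esub> y \<otimes>\<^bsub>grp B n\<^esub> z \<in> Ob} \<inter> cycles B n"
    have oT: "openin (subtopology (top B n) (cycles B n)) T"
      unfolding T_def openin_subtopology
      using tg_transl_open[OF cx_tg[OF cB] Bn.inv_closed[OF yc] Ob(1)] by blast
    have yT: "y \<in> T" using yc ycyc Ob(2) by (simp add: T_def)
    have "T \<subseteq> ?F ` W"
    proof
      fix z assume z: "z \<in> T"
      then have zc: "z \<in> cycles B n" "z \<in> carrier (grp B n)" by (auto simp: T_def cycles_def)
      have "inv\<^bsub>grp B n\<^esub> y \<otimes>\<^bsub>grp B n\<^esub> z \<in> Ob \<inter> cycles B n"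
        using z cyc_mult[OF cB cyc_inv[OF cB ycyc] zc(1)] by (auto simp: T_def)
      with Ob(3) obtain a b where ab: "a \<in> U" "a \<in> cycles A n" "b \<in> V"
        "inv\<^bsub>grp B n\<^esub> y \<otimes>\<^bsub>grp B n\<^esub> z = f n a \<otimes>\<^bsub>grp B n\<^esub> inv\<^bsub>grp B n\<^esub> (dif B (n-1) b)"
        by blast
      have ac: "a \<in> carrier (grp A n)" and bc: "b \<in> carrier (grp B (n-1))" using ab by (auto simp: U_def V_def)
      have db: "dif B (n-1) b \<in> carrier (grp B n)" using dh.hom_closed[OF bc] by simp
      have "z = y \<otimes>\<^bsub>grp B n\<^esub> (inv\<^bsub>grp B n\<^esub> y \<otimes>\<^bsub>grp B n\<^esub> z)"
        using yc zc(2) by (simp add: Bn.m_assoc[symmetric])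
      also have "\<dots> = (f n a0 \<otimes>\<^bsub>grp B n\<^esub> inv\<^bsub>grp B n\<^esub> dif B (n-1) b0) \<otimes>\<^bsub>grp B n\<^esub> (f n a \<otimes>\<^bsub>grp B n\<^esub> inv\<^bsub>grp B n\<^esub> (dif B (n-1) b))"
        using ab(4) ab0(2) by simp
      also have "\<dots> = ?F (a0 \<otimes>\<^bsub>grp A n\<^esub> a, b0 \<otimes>\<^bsub>grp B (n-1)\<^esub> b)"
        using a0 ac b0 bc db0 db dh.hom_mult[OF b0 bc]
        by (simp add: Bn.inv_mult Bn.m_ac)
      finally have ze: "z = ?F (a0 \<otimes>\<^bsub>grp A n\<^esub> a, b0 \<otimes>\<^bsub>grp B (n-1)\<^esub> b)" .
      have "a0 \<otimes>\<^bsub>grp A n\<^esub> a \<in> S1" using ab(1,2) a0 U1(2) cyc_mult[OF cA a0(1) ab(2)] by (auto simp: U_def)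
      moreover have "b0 \<otimes>\<^bsub>grp B (n-1)\<^esub> b \<in> S2" using ab(3) by (auto simp: V_def)
      ultimately have "(a0 \<otimes>\<^bsub>grp A n\<^esub> a, b0 \<otimes>\<^bsub>grp B (n-1)\<^esub> b) \<in> W" using S(5) by blast
      then show "z \<in> ?F ` W" using ze by blast
    qed
    then show "\<exists>T. openin (subtopology (top B n) (cycles B n)) T \<and> y \<in> T \<and> T \<subseteq> ?F ` W"
      using oT yT by blast
  qed
qed


lemma comp_hom:
  assumes cA: "is_complex A" and cB: "is_complex B" and cC: "is_complex C"
    and h1: "cplx_hom A B f" and h2: "cplx_hom B C g"
  shows "cplx_hom A C (cplx_comp g f)"
  unfolding cplx_hom_def cplx_comp_def
proof (intro allI conjI ballI)
  fix n
  show "g n \<circ> f n \<in> hom (grp A n) (grp C n)"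
    using h1 h2 by (auto simp: cplx_hom_def intro: hom_compose)
  show "continuous_map (top A n) (top C n) (g n \<circ> f n)"
    using h1 h2 by (auto simp: cplx_hom_def intro: continuous_map_compose)
  fix x assume "x \<in> carrier (grp A n)"
  then show "(g (n+1) \<circ> f (n+1)) (dif A n x) = dif C n ((g n \<circ> f n) x)"
    using h1 h2 ch_comm[OF h1] ch_comm[OF h2] group_hom.hom_closed[OF ch_gh[OF cA cB h1]] by simp
qed

lemma nb_comp:
  assumes cA: "is_complex A" and cB: "is_complex B" and cC: "is_complex C"
    and h1: "cplx_hom A B f" and h2: "cplx_hom B C g"
    and q1: "qo_nb A B f n" and q2: "qo_nb B C g n"
  shows "qo_nb A C (cplx_comp g f) n"
  unfolding qo_nb_def
proof (intro allI impI, elim conjE)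
  fix U V assume U: "openin (top A n) U" "\<one>\<^bsub>grp A n\<^esub> \<in> U" and V: "openin (top C (n-1)) V" "\<one>\<^bsub>grp C (n-1)\<^esub> \<in> V"
  interpret Cn: comm_group "grp C n" using cx_grp[OF cC] .
  interpret Cm: comm_group "grp C (n-1)" using cx_grp[OF cC] .
  interpret gh: group_hom "grp B n" "grp C n" "g n" using ch_gh[OF cB cC h2] .
  interpret gm: group_hom "grp B (n-1)" "grp C (n-1)" "g (n-1)" using ch_gh[OF cB cC h2] .
  interpret fh: group_hom "grp A n" "grp B n" "f n" using ch_gh[OF cA cB h1] .
  interpret dB: group_hom "grp B (n-1)" "grp B (n-1+1)" "dif B (n-1)" using cx_gh[OF cB] .
  interpret dC: group_hom "grp C (n-1)" "grp C (n-1+1)" "dif C (n-1)" using cx_gh[OF cC] .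
  obtain V2 where V2: "openin (top C (n-1)) V2" "\<one>\<^bsub>grp C (n-1)\<^esub> \<in> V2"
    "\<forall>x\<in>V2. \<forall>y\<in>V2. x \<otimes>\<^bsub>grp C (n-1)\<^esub> y \<in> V"
    using tg_mult_nbhd[OF cx_tg[OF cC] V] by blast
  define W where "W = {b \<in> carrier (grp B (n-1)). g (n-1) b \<in> V2}"
  have oW: "openin (top B (n-1)) W"
    using openin_continuous_map_preimage[OF ch_cont[OF h2] V2(1)] by (simp add: W_def cx_top[OF cB])
  have W1: "\<one>\<^bsub>grp B (n-1)\<^esub> \<in> W" using V2(2) by (simp add: W_def)
  obtain OB where OB: "openin (top B n) OB" "\<one>\<^bsub>grp B n\<^esub> \<in> OB"
      "\<forall>z \<in> OB \<inter> cycles B n. \<exists>a \<in> U \<inter> cycles A n. \<exists>b \<in> W.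
           z = f n a \<otimes>\<^bsub>grp B n\<^esub> inv\<^bsub>grp B n\<^esub> (dif B (n-1) b)"
    using q1 U oW W1 unfolding qo_nb_def by blast
  obtain OC where OC: "openin (top C n) OC" "\<one>\<^bsub>grp C n\<^esub> \<in> OC"
      "\<forall>z \<in> OC \<inter> cycles C n. \<exists>y \<in> OB \<inter> cycles B n. \<exists>c \<in> V2.
           z = g n y \<otimes>\<^bsub>grp C n\<^esub> inv\<^bsub>grp C n\<^esub> (dif C (n-1) c)"
    using q2 OB(1,2) V2(1,2) unfolding qo_nb_def by blast
  have "\<forall>z \<in> OC \<inter> cycles C n. \<exists>a \<in> U \<inter> cycles A n. \<exists>c \<in> V.
           z = cplx_comp g f n a \<otimes>\<^bsub>grp C n\<^esub> inv\<^bsub>grp C n\<^esub> (dif C (n-1) c)"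
  proof
    fix z assume "z \<in> OC \<inter> cycles C n"
    with OC(3) obtain y c where yc: "y \<in> OB" "y \<in> cycles B n" "c \<in> V2"
      "z = g n y \<otimes>\<^bsub>grp C n\<^esub> inv\<^bsub>grp C n\<^esub> (dif C (n-1) c)" by blast
    with OB(3) obtain a b where ab: "a \<in> U" "a \<in> cycles A n" "b \<in> W"
      "y = f n a \<otimes>\<^bsub>grp B n\<^esub> inv\<^bsub>grp B n\<^esub> (dif B (n-1) b)" by blast
    have ac: "a \<in> carrier (grp A n)" using ab(2) cyc_sub[of A n] by blast
    have bc: "b \<in> carrier (grp B (n-1))" using ab(3) by (simp add: W_def)
    have cc: "c \<in> carrier (grp C (n-1))" using yc(3) openin_subset[OF V2(1)] cx_top[OF cC] by blast
    have gbc: "g (n-1) b \<in> carrier (grp C (n-1))" using gm.hom_closed[OF bc] .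
    have dbc: "dif B (n-1) b \<in> carrier (grp B n)" using dB.hom_closed[OF bc] by simp
    have dcc: "dif C (n-1) c \<in> carrier (grp C n)" using dC.hom_closed[OF cc] by simp
    have dgbc: "dif C (n-1) (g (n-1) b) \<in> carrier (grp C n)" using dC.hom_closed[OF gbc] by simp
    have comm: "g n (dif B (n-1) b) = dif C (n-1) (g (n-1) b)" using ch_comm'[OF h2 bc] .
    have dm: "dif C (n-1) (g (n-1) b \<otimes>\<^bsub>grp C (n-1)\<^esub> c) = dif C (n-1) (g (n-1) b) \<otimes>\<^bsub>grp C n\<^esub> dif C (n-1) c"
      using dC.hom_mult[OF gbc cc] by simp
    have "z = g n (f n a) \<otimes>\<^bsub>grp C n\<^esub> inv\<^bsub>grp C n\<^esub> (dif C (n-1) (g (n-1) b \<otimes>\<^bsub>grp C (n-1)\<^esub> c))"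
      using yc(4) ab(4) ac dbc dcc dgbc comm dm fh.hom_closed[OF ac]
      by (simp add: Cn.inv_mult Cn.m_ac)
    moreover have "g (n-1) b \<otimes>\<^bsub>grp C (n-1)\<^esub> c \<in> V" using V2(3) ab(3) yc(3) by (simp add: W_def)
    ultimately show "\<exists>a \<in> U \<inter> cycles A n. \<exists>c \<in> V.
           z = cplx_comp g f n a \<otimes>\<^bsub>grp C n\<^esub> inv\<^bsub>grp C n\<^esub> (dif C (n-1) c)"
      using ab(1,2) by (auto simp: cplx_comp_def)
  qed
  then show "\<exists>Ob. openin (top C n) Ob \<and> \<one>\<^bsub>grp C n\<^esub> \<in> Ob \<and>
       (\<forall>z \<in> Ob \<inter> cycles C n. \<exists>a \<in> U \<inter> cycles A n. \<exists>c \<in> V.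
           z = cplx_comp g f n a \<otimes>\<^bsub>grp C n\<^esub> inv\<^bsub>grp C n\<^esub> (dif C (n-1) c))"
    using OC(1,2) by blast
qed


lemma quot_open:
  "openin (quot_topology X f) U \<longleftrightarrow> U \<subseteq> f ` topspace X \<and> openin X {x \<in> topspace X. f x \<in> U}"
proof -
  have "istopology (\<lambda>U. U \<subseteq> f ` topspace X \<and> openin X {x \<in> topspace X. f x \<in> U})"
    unfolding istopology_def
  proof (rule conjI; intro allI impI)
    fix S T assume "S \<subseteq> f ` topspace X \<and> openin X {x \<in> topspace X. f x \<in> S}"
       "T \<subseteq> f ` topspace X \<and> openin X {x \<in> topspace X. f x \<in> T}"
    then have "openin X ({x \<in> topspace X. f x \<in> S} \<inter> {x \<in> topspace X. f x \<in> T})" by blast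
    moreover have "{x \<in> topspace X. f x \<in> S} \<inter> {x \<in> topspace X. f x \<in> T} = {x \<in> topspace X. f x \<in> S \<inter> T}" by blast
    ultimately show "S \<inter> T \<subseteq> f ` topspace X \<and> openin X {x \<in> topspace X. f x \<in> S \<inter> T}"
      using \<open>S \<subseteq> f ` topspace X \<and> _\<close> by auto
  next
    fix K assume K: "\<forall>S\<in>K. S \<subseteq> f ` topspace X \<and> openin X {x \<in> topspace X. f x \<in> S}"
    then have "openin X (\<Union>S\<in>K. {x \<in> topspace X. f x \<in> S})" by blast
    moreover have "(\<Union>S\<in>K. {x \<in> topspace X. f x \<in> S}) = {x \<in> topspace X. f x \<in> \<Union>K}" by blast
    ultimately show "\<Union>K \<subseteq> f ` topspace X \<and> openin X {x \<in> topspace X. f x \<in> \<Union>K}"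
      using K by auto
  qed
  then show ?thesis by (simp add: quot_topology_def)
qed

lemma rcos_mem: "y \<in> H #>\<^bsub>G\<^esub> x \<longleftrightarrow> (\<exists>h\<in>H. y = h \<otimes>\<^bsub>G\<^esub> x)"
  by (auto simp: r_coset_def)

lemma img_sub:
  assumes cB: "is_complex B" and cC: "is_complex C" and h: "cplx_hom B C g"
  shows "subgroup (g n ` carrier (grp B n)) (grp C n)"
  using group_hom.img_is_subgroup[OF ch_gh[OF cB cC h]] .

lemma img_normal:
  assumes cB: "is_complex B" and cC: "is_complex C" and h: "cplx_hom B C g"
  shows "normal (g n ` carrier (grp B n)) (grp C n)"
  using comm_group.subgroup_imp_normal[OF cx_grp[OF cC] img_sub[OF cB cC h]] .

lemma qdif:
  assumes cB: "is_complex B" and cC: "is_complex C" and h: "cplx_hom B C g"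
    and v: "v \<in> carrier (grp C n)"
  shows "dif (quot_cplx C B g) n (g n ` carrier (grp B n) #>\<^bsub>grp C n\<^esub> v)
       = (g (n+1) ` carrier (grp B (n+1))) #>\<^bsub>grp C (n+1)\<^esub> dif C n v"
proof -
  let ?H = "g n ` carrier (grp B n)" and ?H1 = "g (n+1) ` carrier (grp B (n+1))"
  interpret Cn: comm_group "grp C n" using cx_grp[OF cC] .
  interpret Cn1: comm_group "grp C (n+1)" using cx_grp[OF cC] .
  interpret dC: group_hom "grp C n" "grp C (n+1)" "dif C n" using cx_gh[OF cC] .
  interpret dB: group_hom "grp B n" "grp B (n+1)" "dif B n" using cx_gh[OF cB] .
  interpret gn: group_hom "grp B n" "grp C n" "g n" using ch_gh[OF cB cC h] .
  interpret gn1: group_hom "grp B (n+1)" "grp C (n+1)" "g (n+1)" using ch_gh[OF cB cC h] .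
  have sH: "subgroup ?H (grp C n)" and sH1: "subgroup ?H1 (grp C (n+1))" using img_sub[OF cB cC h] by auto
  define x where "x = (SOME x. x \<in> ?H #>\<^bsub>grp C n\<^esub> v)"
  have "v \<in> ?H #>\<^bsub>grp C n\<^esub> v" using Cn.rcos_self[OF v sH] .
  then have "x \<in> ?H #>\<^bsub>grp C n\<^esub> v" unfolding x_def by (rule someI)
  then obtain b where b: "b \<in> carrier (grp B n)" "x = g n b \<otimes>\<^bsub>grp C n\<^esub> v" by (auto simp: rcos_mem)
  have "dif C n x = g (n+1) (dif B n b) \<otimes>\<^bsub>grp C (n+1)\<^esub> dif C n v"
    using b v ch_comm[OF h b(1)] by simp
  then have "dif C n x \<in> ?H1 #>\<^bsub>grp C (n+1)\<^esub> dif C n v"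
    using b(1) by (auto simp: rcos_mem)
  then have "?H1 #>\<^bsub>grp C (n+1)\<^esub> dif C n v = ?H1 #>\<^bsub>grp C (n+1)\<^esub> dif C n x"
    using Cn1.repr_independence[OF _ dC.hom_closed[OF v] sH1] by blast
  then show ?thesis by (simp add: quot_cplx_def x_def)
qed




lemma Qlemma:
  assumes cB: "is_complex B" and cC: "is_complex C" and h: "cplx_hom B C g"
    and qz: "quasi_open zero_cplx (quot_cplx C B g) (zero_hom (quot_cplx C B g))"
    and V1: "openin (top C (m-1)) V1" "\<one>\<^bsub>grp C (m-1)\<^esub> \<in> V1"
  shows "\<exists>P. openin (top C m) P \<and> \<one>\<^bsub>grp C m\<^esub> \<in> P \<and>
    (\<forall>z\<in>P. dif C m z \<in> g (m+1) ` carrier (grp B (m+1)) \<longrightarrow>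
       (\<exists>b\<in>carrier (grp B m). \<exists>v\<in>V1. z = g m b \<otimes>\<^bsub>grp C m\<^esub> inv\<^bsub>grp C m\<^esub> (dif C (m-1) v)))"
proof -
  define Q where "Q = quot_cplx C B g"
  define H where "H = g m ` carrier (grp B m)"
  define H' where "H' = g (m-1) ` carrier (grp B (m-1))"
  define H1 where "H1 = g (m+1) ` carrier (grp B (m+1))"
  interpret Cm: comm_group "grp C m" using cx_grp[OF cC] .
  interpret Cm': comm_group "grp C (m-1)" using cx_grp[OF cC] .
  interpret Cm1: comm_group "grp C (m+1)" using cx_grp[OF cC] .
  interpret dC': group_hom "grp C (m-1)" "grp C (m-1+1)" "dif C (m-1)" using cx_gh[OF cC] .
  interpret dC: group_hom "grp C m" "grp C (m+1)" "dif C m" using cx_gh[OF cC] .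
  interpret NH: normal H "grp C m" unfolding H_def using img_normal[OF cB cC h] .
  have sH: "subgroup H (grp C m)" and sH': "subgroup H' (grp C (m-1))" and sH1: "subgroup H1 (grp C (m+1))"
    unfolding H_def H'_def H1_def using img_sub[OF cB cC h] by auto
  have gQ: "\<And>k. grp Q k = grp C k Mod (g k ` carrier (grp B k))" by (simp add: Q_def quot_cplx_def)
  have tQ: "\<And>k. top Q k = quot_topology (top C k) (\<lambda>x. (g k ` carrier (grp B k)) #>\<^bsub>grp C k\<^esub> x)"
    by (simp add: Q_def quot_cplx_def)
  have V1c: "V1 \<subseteq> carrier (grp C (m-1))" using openin_subset[OF V1(1)] cx_top[OF cC] by blast
  define S where "S = (\<lambda>v. H' #>\<^bsub>grp C (m-1)\<^esub> v) ` V1"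
  have pre: "{x \<in> carrier (grp C (m-1)). H' #>\<^bsub>grp C (m-1)\<^esub> x \<in> S}
      = (\<Union>k\<in>H'. {x \<in> carrier (grp C (m-1)). inv\<^bsub>grp C (m-1)\<^esub> k \<otimes>\<^bsub>grp C (m-1)\<^esub> x \<in> V1})"
  proof (intro equalityI subsetI)
    fix x assume "x \<in> {x \<in> carrier (grp C (m-1)). H' #>\<^bsub>grp C (m-1)\<^esub> x \<in> S}"
    then obtain v where x: "x \<in> carrier (grp C (m-1))" "v \<in> V1" "H' #>\<^bsub>grp C (m-1)\<^esub> x = H' #>\<^bsub>grp C (m-1)\<^esub> v"
      by (auto simp: S_def)
    have "x \<in> H' #>\<^bsub>grp C (m-1)\<^esub> v" using Cm'.rcos_self[OF x(1) sH'] x(3) by simp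
    then obtain k where k: "k \<in> H'" "x = k \<otimes>\<^bsub>grp C (m-1)\<^esub> v" by (auto simp: rcos_mem)
    have kc: "k \<in> carrier (grp C (m-1))" using k(1) subgroup.subset[OF sH'] by blast
    have "inv\<^bsub>grp C (m-1)\<^esub> k \<otimes>\<^bsub>grp C (m-1)\<^esub> x = v"
      using k(2) kc x(2) V1c by (auto simp: Cm'.m_assoc[symmetric])
    then show "x \<in> (\<Union>k\<in>H'. {x \<in> carrier (grp C (m-1)). inv\<^bsub>grp C (m-1)\<^esub> k \<otimes>\<^bsub>grp C (m-1)\<^esub> x \<in> V1})"
      using k(1) x(1,2) by blast
  next
    fix x assume "x \<in> (\<Union>k\<in>H'. {x \<in> carrier (grp C (m-1)). inv\<^bsub>grp C (m-1)\<^esub> k \<otimes>\<^bsub>grp C (m-1)\<^esub> x \<in> V1})"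
    then obtain k where k: "k \<in> H'" "x \<in> carrier (grp C (m-1))" "inv\<^bsub>grp C (m-1)\<^esub> k \<otimes>\<^bsub>grp C (m-1)\<^esub> x \<in> V1"
      by blast
    define v where "v = inv\<^bsub>grp C (m-1)\<^esub> k \<otimes>\<^bsub>grp C (m-1)\<^esub> x"
    have kc: "k \<in> carrier (grp C (m-1))" using k(1) subgroup.subset[OF sH'] by blast
    have vc: "v \<in> carrier (grp C (m-1))" using kc k(2) by (simp add: v_def)
    have "x = k \<otimes>\<^bsub>grp C (m-1)\<^esub> v" using kc k(2) by (simp add: v_def Cm'.m_assoc[symmetric])
    then have "x \<in> H' #>\<^bsub>grp C (m-1)\<^esub> v" using k(1) by (auto simp: rcos_mem)
    then have "H' #>\<^bsub>grp C (m-1)\<^esub> v = H' #>\<^bsub>grp C (m-1)\<^esub> x"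
      using Cm'.repr_independence[OF _ vc sH'] by blast
    then show "x \<in> {x \<in> carrier (grp C (m-1)). H' #>\<^bsub>grp C (m-1)\<^esub> x \<in> S}"
      using k(2,3) by (auto simp: S_def v_def)
  qed
  have oS: "openin (top Q (m-1)) S"
    unfolding tQ quot_open H'_def[symmetric] cx_top[OF cC]
  proof
    show "S \<subseteq> (\<lambda>x. H' #>\<^bsub>grp C (m-1)\<^esub> x) ` carrier (grp C (m-1))" using V1c by (auto simp: S_def)
    show "openin (top C (m-1)) {x \<in> carrier (grp C (m-1)). H' #>\<^bsub>grp C (m-1)\<^esub> x \<in> S}"
      unfolding pre
    proof (rule openin_Union)
      fix T assume "T \<in> (\<lambda>k. {x \<in> carrier (grp C (m-1)). inv\<^bsub>grp C (m-1)\<^esub> k \<otimes>\<^bsub>grp C (m-1)\<^esub> x \<in> V1}) ` H'"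
      then obtain k where k: "k \<in> H'" "T = {x \<in> carrier (grp C (m-1)). inv\<^bsub>grp C (m-1)\<^esub> k \<otimes>\<^bsub>grp C (m-1)\<^esub> x \<in> V1}"
        by blast
      have "k \<in> carrier (grp C (m-1))" using k(1) subgroup.subset[OF sH'] by blast
      then show "openin (top C (m-1)) T" unfolding k(2)
        by (intro tg_transl_open[OF cx_tg[OF cC] _ V1(1)] Cm'.inv_closed)
    qed
  qed
  let ?F = "\<lambda>(a,b). zero_hom Q m a \<otimes>\<^bsub>grp Q m\<^esub> inv\<^bsub>grp Q m\<^esub> (dif Q (m-1) b)"
  have om: "open_map (prod_topology (subtopology (top zero_cplx m) (cycles zero_cplx m)) (top Q (m-1)))
              (subtopology (top Q m) (cycles Q m)) ?F"
    using qz[unfolded quasi_open_def, THEN spec[of _ m]] unfolding Q_def .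
  have "openin (subtopology (top zero_cplx m) (cycles zero_cplx m)) {()}"
    unfolding openin_subtopology by (rule exI[of _ "{()}"]) (auto simp: cycles_def zero_cplx_def)
  then have "openin (prod_topology (subtopology (top zero_cplx m) (cycles zero_cplx m)) (top Q (m-1))) ({()} \<times> S)"
    using oS by (simp add: openin_prod_Times_iff)
  then have "openin (subtopology (top Q m) (cycles Q m)) (?F ` ({()} \<times> S))"
    using om by (simp add: open_map_def)
  then obtain Ob where Ob: "openin (top Q m) Ob" "?F ` ({()} \<times> S) = Ob \<inter> cycles Q m"
    by (auto simp: openin_subtopology)
  have Fv: "?F ((), H' #>\<^bsub>grp C (m-1)\<^esub> v) = H #>\<^bsub>grp C m\<^esub> inv\<^bsub>grp C m\<^esub> (dif C (m-1) v)"
    if v: "v \<in> carrier (grp C (m-1))" for v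
  proof -
    have e1: "dif Q (m-1) (H' #>\<^bsub>grp C (m-1)\<^esub> v) = H #>\<^bsub>grp C m\<^esub> dif C (m-1) v"
      using qdif[OF cB cC h v] by (simp add: Q_def H'_def H_def)
    have dv: "dif C (m-1) v \<in> carrier (grp C m)" using dC'.hom_closed[OF v] by simp
    have c1: "H #>\<^bsub>grp C m\<^esub> dif C (m-1) v \<in> carrier (grp C m Mod H)"
      using dv subgroup.subset[OF sH] by (simp add: carrier_FactGroup)
    have c2: "H #>\<^bsub>grp C m\<^esub> inv\<^bsub>grp C m\<^esub> dif C (m-1) v \<in> carrier (grp C m Mod H)"
      using dv subgroup.subset[OF sH] by (simp add: carrier_FactGroup)
    have gm: "grp Q m = grp C m Mod H" using gQ[of m] by (simp add: H_def)
    have i: "inv\<^bsub>grp C m Mod H\<^esub> (H #>\<^bsub>grp C m\<^esub> dif C (m-1) v) = H #>\<^bsub>grp C m\<^esub> inv\<^bsub>grp C m\<^esub> dif C (m-1) v"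
      using NH.inv_FactGroup[OF c1] NH.rcos_inv[OF dv] by simp
    have o: "\<one>\<^bsub>grp C m Mod H\<^esub> \<otimes>\<^bsub>grp C m Mod H\<^esub> (H #>\<^bsub>grp C m\<^esub> inv\<^bsub>grp C m\<^esub> dif C (m-1) v) = H #>\<^bsub>grp C m\<^esub> inv\<^bsub>grp C m\<^esub> dif C (m-1) v"
      using monoid.l_one[OF group.is_monoid[OF NH.factorgroup_is_group] c2] .
    show ?thesis unfolding gm by (simp only: e1 i o zero_hom_def gm case_prod_conv)
  qed
  define P where "P = {x \<in> carrier (grp C m). H #>\<^bsub>grp C m\<^esub> x \<in> Ob}"
  have oP: "openin (top C m) P"
    using Ob(1) unfolding P_def tQ quot_open H_def[symmetric] cx_top[OF cC] by blast
  have d1: "dif C (m-1) \<one>\<^bsub>grp C (m-1)\<^esub> = \<one>\<^bsub>grp C m\<^esub>" using dC'.hom_one by simp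
  have "?F ((), H' #>\<^bsub>grp C (m-1)\<^esub> \<one>\<^bsub>grp C (m-1)\<^esub>) = H #>\<^bsub>grp C m\<^esub> inv\<^bsub>grp C m\<^esub> \<one>\<^bsub>grp C m\<^esub>"
    using Fv[OF Cm'.one_closed] unfolding d1 .
  also have "\<dots> = H" using Cm.coset_mult_one[OF subgroup.subset[OF sH]] by (simp only: Cm.inv_one)
  finally have F1: "?F ((), H' #>\<^bsub>grp C (m-1)\<^esub> \<one>\<^bsub>grp C (m-1)\<^esub>) = H" .
  have "((), H' #>\<^bsub>grp C (m-1)\<^esub> \<one>\<^bsub>grp C (m-1)\<^esub>) \<in> {()} \<times> S" using V1(2) by (simp add: S_def)
  from image_eqI[where f="?F", OF F1[symmetric] this] have "H \<in> Ob \<inter> cycles Q m" by (simp only: Ob(2))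
  then have "H \<in> Ob" by blast
  then have P1: "\<one>\<^bsub>grp C m\<^esub> \<in> P" using subgroup.subset[OF sH] by (simp add: P_def)
  have "\<forall>z\<in>P. dif C m z \<in> H1 \<longrightarrow>
       (\<exists>b\<in>carrier (grp B m). \<exists>v\<in>V1. z = g m b \<otimes>\<^bsub>grp C m\<^esub> inv\<^bsub>grp C m\<^esub> (dif C (m-1) v))"
  proof (intro ballI impI)
    fix z assume zP: "z \<in> P" and dz: "dif C m z \<in> H1"
    have zc: "z \<in> carrier (grp C m)" using zP by (simp add: P_def)
    have "dif Q m (H #>\<^bsub>grp C m\<^esub> z) = H1 #>\<^bsub>grp C (m+1)\<^esub> dif C m z"
      using qdif[OF cB cC h zc] by (simp add: Q_def H1_def H_def)
    also have "\<dots> = H1" using Cm1.coset_join2[OF dC.hom_closed[OF zc] sH1 dz] .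
    finally have "dif Q m (H #>\<^bsub>grp C m\<^esub> z) = \<one>\<^bsub>grp Q (m+1)\<^esub>" by (simp add: gQ H1_def)
    moreover have "H #>\<^bsub>grp C m\<^esub> z \<in> carrier (grp Q m)"
      using zc subgroup.subset[OF sH] by (simp add: carrier_FactGroup gQ H_def)
    ultimately have "H #>\<^bsub>grp C m\<^esub> z \<in> cycles Q m" by (simp add: cycles_def)
    then have "H #>\<^bsub>grp C m\<^esub> z \<in> ?F ` ({()} \<times> S)" using Ob(2) zP by (simp add: P_def)
    then obtain v where v: "v \<in> V1" "H #>\<^bsub>grp C m\<^esub> z = ?F ((), H' #>\<^bsub>grp C (m-1)\<^esub> v)"
      by (auto simp: S_def)
    then have "H #>\<^bsub>grp C m\<^esub> z = H #>\<^bsub>grp C m\<^esub> inv\<^bsub>grp C m\<^esub> (dif C (m-1) v)"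
      using v(2) Fv[of v] v(1) V1c by blast
    then have "z \<in> H #>\<^bsub>grp C m\<^esub> inv\<^bsub>grp C m\<^esub> (dif C (m-1) v)"
      using Cm.rcos_self[OF zc sH] by simp
    then obtain k where "k \<in> H" "z = k \<otimes>\<^bsub>grp C m\<^esub> inv\<^bsub>grp C m\<^esub> (dif C (m-1) v)"
      by (auto simp: rcos_mem)
    then show "\<exists>b\<in>carrier (grp B m). \<exists>v\<in>V1. z = g m b \<otimes>\<^bsub>grp C m\<^esub> inv\<^bsub>grp C m\<^esub> (dif C (m-1) v)"
      using v(1) by (auto simp: H_def)
  qed
  then show ?thesis using oP P1 by (auto simp: H1_def)
qed


lemma emb_pull:
  assumes "embedding_map X Y f" "openin X U"
  shows "\<exists>Ob. openin Y Ob \<and> f ` U \<subseteq> Ob \<and> (\<forall>x\<in>topspace X. f x \<in> Ob \<longrightarrow> x \<in> U)"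
proof -
  have hm: "homeomorphic_map X (subtopology Y (f ` topspace X)) f" using assms(1) by (simp add: embedding_map_def)
  have inj: "inj_on f (topspace X)" using homeomorphic_imp_injective_map[OF hm] .
  have "openin (subtopology Y (f ` topspace X)) (f ` U)"
    using homeomorphic_imp_open_map[OF hm] assms(2) by (simp add: open_map_def)
  then obtain Ob where Ob: "openin Y Ob" "f ` U = Ob \<inter> f ` topspace X" by (auto simp: openin_subtopology)
  have Us: "U \<subseteq> topspace X" using openin_subset[OF assms(2)] .
  have "\<forall>x\<in>topspace X. f x \<in> Ob \<longrightarrow> x \<in> U"
  proof (intro ballI impI)
    fix x assume x: "x \<in> topspace X" "f x \<in> Ob"
    then have "f x \<in> f ` U" using Ob(2) by blast
    then obtain u where "u \<in> U" "f x = f u" by blast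
    then show "x \<in> U" using inj x(1) Us by (metis inj_on_def subsetD)
  qed
  then show ?thesis using Ob by blast
qed

lemma emb_inj:
  assumes "is_complex B" "embedding_map (top B n) (top C n) (g n)"
    "x \<in> carrier (grp B n)" "y \<in> carrier (grp B n)" "g n x = g n y"
  shows "x = y"
  using homeomorphic_imp_injective_map[OF assms(2)[unfolded embedding_map_def]] assms
  by (simp add: cx_top inj_on_def)

lemma nb_b1:
  assumes cB: "is_complex B" and cC: "is_complex C" and h: "cplx_hom B C g"
    and emb: "\<And>n. embedding_map (top B n) (top C n) (g n)"
    and qz: "quasi_open zero_cplx (quot_cplx C B g) (zero_hom (quot_cplx C B g))"
  shows "qo_nb B C g n"
  unfolding qo_nb_def
proof (intro allI impI, elim conjE)
  fix U V assume U: "openin (top B n) U" "\<one>\<^bsub>grp B n\<^esub> \<in> U" and V: "openin (top C (n-1)) V" "\<one>\<^bsub>grp C (n-1)\<^esub> \<in> V"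
  interpret Cn: comm_group "grp C n" using cx_grp[OF cC] .
  interpret Cn1: comm_group "grp C (n+1)" using cx_grp[OF cC] .
  interpret gh: group_hom "grp B n" "grp C n" "g n" using ch_gh[OF cB cC h] .
  interpret gh1: group_hom "grp B (n+1)" "grp C (n+1)" "g (n+1)" using ch_gh[OF cB cC h] .
  interpret dB: group_hom "grp B n" "grp B (n+1)" "dif B n" using cx_gh[OF cB] .
  interpret dC: group_hom "grp C n" "grp C (n+1)" "dif C n" using cx_gh[OF cC] .
  interpret dC': group_hom "grp C (n-1)" "grp C (n-1+1)" "dif C (n-1)" using cx_gh[OF cC] .
  have Bn1one: "\<one>\<^bsub>grp B (n+1)\<^esub> \<in> carrier (grp B (n+1))"
    using cx_grp[OF cB, of "n+1"] by (simp add: comm_group_def group.is_monoid monoid.one_closed)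
  obtain O1 where O1: "openin (top C n) O1" "g n ` U \<subseteq> O1" "\<forall>x\<in>carrier (grp B n). g n x \<in> O1 \<longrightarrow> x \<in> U"
    using emb_pull[OF emb U(1)] cx_top[OF cB] by metis
  have O11: "\<one>\<^bsub>grp C n\<^esub> \<in> O1" using O1(2) U(2) gh.hom_one by (metis image_eqI subsetD)
  obtain O2 where O2: "openin (top C n) O2" "\<one>\<^bsub>grp C n\<^esub> \<in> O2" "\<forall>x\<in>O2. \<forall>y\<in>O2. x \<otimes>\<^bsub>grp C n\<^esub> y \<in> O1"
    using tg_mult_nbhd[OF cx_tg[OF cC] O1(1) O11] by blast
  have e: "n - 1 + 1 = n" by simp
  define V1 where "V1 = {v \<in> carrier (grp C (n-1)). dif C (n-1) v \<in> O2} \<inter> V"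
  have oV1: "openin (top C (n-1)) V1"
    using openin_continuous_map_preimage[OF cx_dcont[OF cC, of "n-1", unfolded e] O2(1)] V(1)
    by (auto simp: V1_def cx_top[OF cC])
  have V11: "\<one>\<^bsub>grp C (n-1)\<^esub> \<in> V1" using dC'.hom_one O2(2) V(2) by (simp add: V1_def)
  obtain P where P: "openin (top C n) P" "\<one>\<^bsub>grp C n\<^esub> \<in> P"
    "\<forall>z\<in>P. dif C n z \<in> g (n+1) ` carrier (grp B (n+1)) \<longrightarrow>
       (\<exists>b\<in>carrier (grp B n). \<exists>v\<in>V1. z = g n b \<otimes>\<^bsub>grp C n\<^esub> inv\<^bsub>grp C n\<^esub> (dif C (n-1) v))"
    using Qlemma[OF cB cC h qz oV1 V11] by blast
  have "\<forall>z \<in> (P \<inter> O2) \<inter> cycles C n. \<exists>b \<in> U \<inter> cycles B n. \<exists>v \<in> V.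
           z = g n b \<otimes>\<^bsub>grp C n\<^esub> inv\<^bsub>grp C n\<^esub> (dif C (n-1) v)"
  proof
    fix z assume z: "z \<in> (P \<inter> O2) \<inter> cycles C n"
    have zc: "z \<in> carrier (grp C n)" and dz: "dif C n z = \<one>\<^bsub>grp C (n+1)\<^esub>" using z by (auto simp: cycles_def)
    have "dif C n z \<in> g (n+1) ` carrier (grp B (n+1))"
      using dz gh1.hom_one by (metis Bn1one image_eqI)
    then obtain b v where bv: "b \<in> carrier (grp B n)" "v \<in> V1" "z = g n b \<otimes>\<^bsub>grp C n\<^esub> inv\<^bsub>grp C n\<^esub> (dif C (n-1) v)"
      using P(3) z by blast
    have vc: "v \<in> carrier (grp C (n-1))" using bv(2) by (simp add: V1_def)
    have dv: "dif C (n-1) v \<in> carrier (grp C n)" using dC'.hom_closed[OF vc] by simp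
    have gb: "g n b = z \<otimes>\<^bsub>grp C n\<^esub> dif C (n-1) v"
      using bv(3) Cn.inv_solve_right[OF zc gh.hom_closed[OF bv(1)] dv] by simp
    have "g n b \<in> O1" using gb O2(3) z bv(2) by (simp add: V1_def)
    then have bU: "b \<in> U" using O1(3) bv(1) by blast
    have "g (n+1) (dif B n b) = dif C n (g n b)" using ch_comm[OF h bv(1)] .
    also have "\<dots> = dif C n z \<otimes>\<^bsub>grp C (n+1)\<^esub> dif C n (dif C (n-1) v)"
      using gb dC.hom_mult[OF zc dv] by simp
    also have "\<dots> = \<one>\<^bsub>grp C (n+1)\<^esub>" using dz cx_dd'[OF cC vc] by simp
    also have "\<dots> = g (n+1) \<one>\<^bsub>grp B (n+1)\<^esub>" using gh1.hom_one by simp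
    finally have "dif B n b = \<one>\<^bsub>grp B (n+1)\<^esub>"
      using emb_inj[where B=B and n="n+1" and C=C and g=g, OF cB emb dB.hom_closed[OF bv(1)] Bn1one] by blast
    then have "b \<in> cycles B n" using bv(1) by (simp add: cycles_def)
    moreover have "v \<in> V" using bv(2) by (simp add: V1_def)
    ultimately show "\<exists>b \<in> U \<inter> cycles B n. \<exists>v \<in> V.
           z = g n b \<otimes>\<^bsub>grp C n\<^esub> inv\<^bsub>grp C n\<^esub> (dif C (n-1) v)" using bU bv(3) by blast
  qed
  moreover have "openin (top C n) (P \<inter> O2)" using P(1) O2(1) by blast
  moreover have "\<one>\<^bsub>grp C n\<^esub> \<in> P \<inter> O2" using P(2) O2(2) by blast
  ultimately show "\<exists>Ob. openin (top C n) Ob \<and> \<one>\<^bsub>grp C n\<^esub> \<in> Ob \<and>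
       (\<forall>z \<in> Ob \<inter> cycles C n. \<exists>b \<in> U \<inter> cycles B n. \<exists>v \<in> V.
           z = g n b \<otimes>\<^bsub>grp C n\<^esub> inv\<^bsub>grp C n\<^esub> (dif C (n-1) v))" by blast
qed


lemma nb_b2:
  assumes cA: "is_complex A" and cB: "is_complex B" and cC: "is_complex C"
    and h1: "cplx_hom A B f" and h: "cplx_hom B C g"
    and emb: "\<And>n. embedding_map (top B n) (top C n) (g n)"
    and qz: "quasi_open zero_cplx (quot_cplx C B g) (zero_hom (quot_cplx C B g))"
    and q: "qo_nb A C (cplx_comp g f) n"
  shows "qo_nb A B f n"
  unfolding qo_nb_def
proof (intro allI impI, elim conjE)
  fix U V assume U: "openin (top A n) U" "\<one>\<^bsub>grp A n\<^esub> \<in> U" and V: "openin (top B (n-1)) V" "\<one>\<^bsub>grp B (n-1)\<^esub> \<in> V"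
  have e: "n - 1 - 1 + 1 = n - 1" by simp
  have e2: "n - 1 + 1 = n" by simp
  interpret Cn: comm_group "grp C n" using cx_grp[OF cC] .
  interpret Cm: comm_group "grp C (n-1)" using cx_grp[OF cC] .
  interpret Bn: comm_group "grp B n" using cx_grp[OF cB] .
  interpret gh: group_hom "grp B n" "grp C n" "g n" using ch_gh[OF cB cC h] .
  interpret gm: group_hom "grp B (n-1)" "grp C (n-1)" "g (n-1)" using ch_gh[OF cB cC h] .
  interpret fh: group_hom "grp A n" "grp B n" "f n" using ch_gh[OF cA cB h1] .
  interpret dB: group_hom "grp B (n-1)" "grp B n" "dif B (n-1)" using cx_gh[OF cB, of "n-1", unfolded e2] .
  interpret dC: group_hom "grp C (n-1)" "grp C n" "dif C (n-1)" using cx_gh[OF cC, of "n-1", unfolded e2] .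
  interpret dW: group_hom "grp C (n-1-1)" "grp C (n-1)" "dif C (n-1-1)" using cx_gh[OF cC, of "n-1-1", unfolded e] .
  obtain O1 where O1: "openin (top C (n-1)) O1" "g (n-1) ` V \<subseteq> O1"
      "\<forall>x\<in>carrier (grp B (n-1)). g (n-1) x \<in> O1 \<longrightarrow> x \<in> V"
    using emb_pull[OF emb V(1)] cx_top[OF cB] by metis
  have O11: "\<one>\<^bsub>grp C (n-1)\<^esub> \<in> O1" using O1(2) V(2) gm.hom_one by (metis image_eqI subsetD)
  obtain O2 where O2: "openin (top C (n-1)) O2" "\<one>\<^bsub>grp C (n-1)\<^esub> \<in> O2"
      "\<forall>x\<in>O2. \<forall>y\<in>O2. x \<otimes>\<^bsub>grp C (n-1)\<^esub> y \<in> O1"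
    using tg_mult_nbhd[OF cx_tg[OF cC] O1(1) O11] by blast
  define W where "W = {w \<in> carrier (grp C (n-1-1)). dif C (n-1-1) w \<in> O2}"
  have oW: "openin (top C (n-1-1)) W"
    using openin_continuous_map_preimage[OF cx_dcont[OF cC, of "n-1-1", unfolded e] O2(1)]
    by (simp add: W_def cx_top[OF cC])
  have W1c: "\<one>\<^bsub>grp C (n-1-1)\<^esub> \<in> carrier (grp C (n-1-1))"
    using cx_grp[OF cC, of "n-1-1"] by (simp add: comm_group_def group.is_monoid monoid.one_closed)
  have W1: "\<one>\<^bsub>grp C (n-1-1)\<^esub> \<in> W" using dW.hom_one O2(2) W1c by (simp add: W_def)
  obtain P where P: "openin (top C (n-1)) P" "\<one>\<^bsub>grp C (n-1)\<^esub> \<in> P"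
    "\<forall>z\<in>P. dif C (n-1) z \<in> g (n-1+1) ` carrier (grp B (n-1+1)) \<longrightarrow>
       (\<exists>b\<in>carrier (grp B (n-1)). \<exists>v\<in>W. z = g (n-1) b \<otimes>\<^bsub>grp C (n-1)\<^esub> inv\<^bsub>grp C (n-1)\<^esub> (dif C (n-1-1) v))"
    using Qlemma[OF cB cC h qz oW W1] by blast
  have P3: "\<forall>z\<in>P. dif C (n-1) z \<in> g n ` carrier (grp B n) \<longrightarrow>
       (\<exists>b\<in>carrier (grp B (n-1)). \<exists>v\<in>W. z = g (n-1) b \<otimes>\<^bsub>grp C (n-1)\<^esub> inv\<^bsub>grp C (n-1)\<^esub> (dif C (n-1-1) v))"
    using P(3) unfolding e2 .
  have oVC: "openin (top C (n-1)) (P \<inter> O2)" using P(1) O2(1) by blast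
  have VC1: "\<one>\<^bsub>grp C (n-1)\<^esub> \<in> P \<inter> O2" using P(2) O2(2) by blast
  obtain OC where OC: "openin (top C n) OC" "\<one>\<^bsub>grp C n\<^esub> \<in> OC"
      "\<forall>z \<in> OC \<inter> cycles C n. \<exists>a \<in> U \<inter> cycles A n. \<exists>c \<in> P \<inter> O2.
           z = cplx_comp g f n a \<otimes>\<^bsub>grp C n\<^esub> inv\<^bsub>grp C n\<^esub> (dif C (n-1) c)"
    using q U oVC VC1 unfolding qo_nb_def by blast
  define Ob where "Ob = {y \<in> carrier (grp B n). g n y \<in> OC}"
  have oOb: "openin (top B n) Ob"
    using openin_continuous_map_preimage[OF ch_cont[OF h] OC(1)] by (simp add: Ob_def cx_top[OF cB])
  have Ob1: "\<one>\<^bsub>grp B n\<^esub> \<in> Ob" using OC(2) gh.hom_one by (simp add: Ob_def)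
  have "\<forall>y \<in> Ob \<inter> cycles B n. \<exists>a \<in> U \<inter> cycles A n. \<exists>b \<in> V.
           y = f n a \<otimes>\<^bsub>grp B n\<^esub> inv\<^bsub>grp B n\<^esub> (dif B (n-1) b)"
  proof
    fix y assume y: "y \<in> Ob \<inter> cycles B n"
    have yc: "y \<in> carrier (grp B n)" using y by (simp add: Ob_def)
    have "g n y \<in> OC \<inter> cycles C n" using y cyc_hom[OF cB cC h, of y n] by (simp add: Ob_def)
    then have "\<exists>a \<in> U \<inter> cycles A n. \<exists>c \<in> P \<inter> O2.
           g n y = cplx_comp g f n a \<otimes>\<^bsub>grp C n\<^esub> inv\<^bsub>grp C n\<^esub> (dif C (n-1) c)"
      by (rule bspec[OF OC(3)])
    then obtain a c where ac: "a \<in> U" "a \<in> cycles A n" "c \<in> P" "c \<in> O2"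
      "g n y = g n (f n a) \<otimes>\<^bsub>grp C n\<^esub> inv\<^bsub>grp C n\<^esub> (dif C (n-1) c)"
      unfolding cplx_comp_def o_def by blast
    have acr: "a \<in> carrier (grp A n)" using ac(2) cyc_sub[of A n] by blast
    have fa: "f n a \<in> carrier (grp B n)" using fh.hom_closed[OF acr] .
    have cc: "c \<in> carrier (grp C (n-1))" using ac(3) openin_subset[OF P(1)] cx_top[OF cC] by blast
    have dcc: "dif C (n-1) c \<in> carrier (grp C n)" using dC.hom_closed[OF cc] .
    have "g n (f n a) = g n y \<otimes>\<^bsub>grp C n\<^esub> dif C (n-1) c"
      using ac(5) Cn.inv_solve_right[OF gh.hom_closed[OF yc] gh.hom_closed[OF fa] dcc] by simp
    then have "dif C (n-1) c = inv\<^bsub>grp C n\<^esub> (g n y) \<otimes>\<^bsub>grp C n\<^esub> g n (f n a)"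
      using Cn.inv_solve_left[OF dcc gh.hom_closed[OF yc] gh.hom_closed[OF fa]] by simp
    also have "\<dots> = g n (inv\<^bsub>grp B n\<^esub> y \<otimes>\<^bsub>grp B n\<^esub> f n a)" using yc fa by simp
    finally have "dif C (n-1) c \<in> g n ` carrier (grp B n)" using yc fa by blast
    then obtain b w where bw: "b \<in> carrier (grp B (n-1))" "w \<in> W"
      "c = g (n-1) b \<otimes>\<^bsub>grp C (n-1)\<^esub> inv\<^bsub>grp C (n-1)\<^esub> (dif C (n-1-1) w)"
      using P3 ac(3) by blast
    have wc: "w \<in> carrier (grp C (n-1-1))" using bw(2) by (simp add: W_def)
    have dw: "dif C (n-1-1) w \<in> carrier (grp C (n-1))" using dW.hom_closed[OF wc] .
    have gb: "g (n-1) b = c \<otimes>\<^bsub>grp C (n-1)\<^esub> dif C (n-1-1) w"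
      using bw(3) Cm.inv_solve_right[OF cc gm.hom_closed[OF bw(1)] dw] by simp
    have "g (n-1) b \<in> O1" using gb O2(3) ac(4) bw(2) by (simp add: W_def)
    then have bV: "b \<in> V" using O1(3) bw(1) by blast
    have ddw: "dif C (n-1) (dif C (n-1-1) w) = \<one>\<^bsub>grp C n\<^esub>"
      using cx_dd'[OF cC, of w "n-1", unfolded e2] wc by simp
    have "dif C (n-1) c = dif C (n-1) (g (n-1) b) \<otimes>\<^bsub>grp C n\<^esub> inv\<^bsub>grp C n\<^esub> dif C (n-1) (dif C (n-1-1) w)"
      using bw(3) dC.hom_mult[OF gm.hom_closed[OF bw(1)] Cm.inv_closed[OF dw]] dC.hom_inv[OF dw] by simp
    also have "\<dots> = g n (dif B (n-1) b)" using ddw ch_comm'[OF h bw(1)] dC.hom_closed[OF gm.hom_closed[OF bw(1)]] by simp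
    finally have dc: "dif C (n-1) c = g n (dif B (n-1) b)" .
    have db: "dif B (n-1) b \<in> carrier (grp B n)" using dB.hom_closed[OF bw(1)] .
    have "g n y = g n (f n a \<otimes>\<^bsub>grp B n\<^esub> inv\<^bsub>grp B n\<^esub> dif B (n-1) b)"
      using ac(5) dc fa db by simp
    then have "y = f n a \<otimes>\<^bsub>grp B n\<^esub> inv\<^bsub>grp B n\<^esub> dif B (n-1) b"
      using emb_inj[where B=B and n=n and C=C and g=g, OF cB emb yc] fa db by simp
    then show "\<exists>a \<in> U \<inter> cycles A n. \<exists>b \<in> V.
           y = f n a \<otimes>\<^bsub>grp B n\<^esub> inv\<^bsub>grp B n\<^esub> (dif B (n-1) b)"
      using ac(1,2) bV by blast
  qed
  then show "\<exists>Ob. openin (top B n) Ob \<and> \<one>\<^bsub>grp B n\<^esub> \<in> Ob \<and>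
       (\<forall>y \<in> Ob \<inter> cycles B n. \<exists>a \<in> U \<inter> cycles A n. \<exists>b \<in> V.
           y = f n a \<otimes>\<^bsub>grp B n\<^esub> inv\<^bsub>grp B n\<^esub> (dif B (n-1) b))"
    using oOb Ob1 by blast
qed

theorem proposition2p3:
  fixes A :: "'a cplx" and B :: "'b cplx" and C :: "'c cplx"
    and \<phi> :: "int \<Rightarrow> 'a \<Rightarrow> 'b" and \<psi> :: "int \<Rightarrow> 'b \<Rightarrow> 'c"
  assumes "is_complex A" and "is_complex B" and "is_complex C"
    and "cplx_hom A B \<phi>" and "cplx_hom B C \<psi>"
  shows "(quasi_open A B \<phi> \<and> quasi_open B C \<psi> \<longrightarrow> quasi_open A C (cplx_comp \<psi> \<phi>))
    \<and> ((\<forall>n. embedding_map (top B n) (top C n) (\<psi> n))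
        \<and> quasi_open zero_cplx (quot_cplx C B \<psi>) (zero_hom (quot_cplx C B \<psi>))
        \<longrightarrow> quasi_open B C \<psi>
            \<and> (quasi_open A C (cplx_comp \<psi> \<phi>) \<longrightarrow> quasi_open A B \<phi>))"
proof (intro conjI impI; (elim conjE)?)
  assume q1: "quasi_open A B \<phi>" and q2: "quasi_open B C \<psi>"
  show "quasi_open A C (cplx_comp \<psi> \<phi>)"
    using nb_imp_qo[OF assms(1,3) comp_hom[OF assms]]
      nb_comp[OF assms qo_imp_nb[OF assms(1,2,4) q1] qo_imp_nb[OF assms(2,3,5) q2]] by blast
next
  assume emb: "\<forall>n. embedding_map (top B n) (top C n) (\<psi> n)"
    and qz: "quasi_open zero_cplx (quot_cplx C B \<psi>) (zero_hom (quot_cplx C B \<psi>))"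
  show "quasi_open B C \<psi>"
    using nb_imp_qo[OF assms(2,3,5)] nb_b1[OF assms(2,3,5) emb[rule_format] qz] by blast
next
  assume emb: "\<forall>n. embedding_map (top B n) (top C n) (\<psi> n)"
    and qz: "quasi_open zero_cplx (quot_cplx C B \<psi>) (zero_hom (quot_cplx C B \<psi>))"
    and q: "quasi_open A C (cplx_comp \<psi> \<phi>)"
  show "quasi_open A B \<phi>"
    using nb_imp_qo[OF assms(1,2,4)]
      nb_b2[OF assms emb[rule_format] qz qo_imp_nb[OF assms(1,3) comp_hom[OF assms] q]] by blast
qed

end
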